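(* Let $(N,p)$ be a majorant of a second-order polynomial $P$. Define $p_i\colon\mathbb N^{\mathbb N}\times\mathbb N\to\mathbb N$ recursively by $p_0(l,n)=p(n)$ and $p_{i+1}(l,n)=p(\max\{n,l(p_i(l,n))\})$. Then for every monotone $l\colon\mathbb N\to\mathbb N$ and every $n\in\mathbb N$, $P(l,n)\le p_N(l,n)$.
   Context: Second-order polynomials are the smallest class of functions $P\colon\mathbb N^{\mathbb N}\times\mathbb N\to\mathbb N$ that contains all $(l,n)\mapsto p(n)$ for polynomials $p$ with natural-number coefficients, and is closed under pointwise sum, pointwise product, and $P\mapsto P^+$ with $P^+(l,n)=l(P(l,n))$. A polynomial tree is a finite rooted tree in which each node is labeled by a polynomial in $\mathbb N[X_0,\ldots,X_k]$, $k$ being the number of children of that node, with the children of each node linearly ordered. Recursively assign functions to nodes: a leaf labeled $t$ gets $(l,n)\mapsto t(n)$; a node labeled $t$ with children (in order) assigned $P_1,\ldots,P_k$ gets $(l,n)\mapsto t(n,l(P_1(l,n)),\ldots,l(P_k(l,n)))$. The tree is a description of $P$ if $P$ is assigned to the root. A pair $(N,p)$ with $N\in\mathbb N$ and $p\colon\mathbb N\to\mathbb N$ is a majorant of $P$ if $p(n)\ge n$ for all $n$ and there is a description $T$ of $P$ such that $N$ is the height of $T$ (a single-node tree has height $0$) and for every $n$ and every node $t$ of $T$, $p(n)\ge t(n,\ldots,n)$. *)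

theory Defs
  imports Main
begin

datatype npoly = PConst nat | PVar nat | PAdd npoly npoly | PMul npoly npoly

fun peval :: "npoly \<Rightarrow> (nat \<Rightarrow> nat) \<Rightarrow> nat" where
  "peval (PConst c) v = c"
| "peval (PVar i) v = v i"
| "peval (PAdd a b) v = peval a v + peval b v"
| "peval (PMul a b) v = peval a v * peval b v"

fun pvars :: "npoly \<Rightarrow> nat set" where
  "pvars (PConst c) = {}"
| "pvars (PVar i) = {i}"
| "pvars (PAdd a b) = pvars a \<union> pvars b"
| "pvars (PMul a b) = pvars a \<union> pvars b"

definition poly_in :: "nat \<Rightarrow> npoly \<Rightarrow> bool" where
  "poly_in k t \<longleftrightarrow> pvars t \<subseteq> {..k}"

inductive_set second_order_poly :: "((nat \<Rightarrow> nat) \<Rightarrow> nat \<Rightarrow> nat) set" where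
  sop_poly: "poly_in 0 q \<Longrightarrow> (\<lambda>l n. peval q (\<lambda>_. n)) \<in> second_order_poly"
| sop_add: "P \<in> second_order_poly \<Longrightarrow> Q \<in> second_order_poly \<Longrightarrow>
      (\<lambda>l n. P l n + Q l n) \<in> second_order_poly"
| sop_mul: "P \<in> second_order_poly \<Longrightarrow> Q \<in> second_order_poly \<Longrightarrow>
      (\<lambda>l n. P l n * Q l n) \<in> second_order_poly"
| sop_plus: "P \<in> second_order_poly \<Longrightarrow> (\<lambda>l n. l (P l n)) \<in> second_order_poly"

datatype ptree = PNode npoly "ptree list"

fun ptree_wf :: "ptree \<Rightarrow> bool" where
  "ptree_wf (PNode t cs) \<longleftrightarrow> poly_in (length cs) t \<and> (\<forall>c \<in> set cs. ptree_wf c)"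

fun ptree_fun :: "ptree \<Rightarrow> (nat \<Rightarrow> nat) \<Rightarrow> nat \<Rightarrow> nat" where
  "ptree_fun (PNode t cs) l n =
     (let vs = map (\<lambda>c. l (ptree_fun c l n)) cs
      in peval t (\<lambda>i. if i = 0 then n else vs ! (i - 1)))"

fun ptree_height :: "ptree \<Rightarrow> nat" where
  "ptree_height (PNode t []) = 0"
| "ptree_height (PNode t cs) = Suc (Max (set (map ptree_height cs)))"

fun ptree_labels :: "ptree \<Rightarrow> npoly set" where
  "ptree_labels (PNode t cs) = insert t (\<Union>c \<in> set cs. ptree_labels c)"

definition is_description :: "ptree \<Rightarrow> ((nat \<Rightarrow> nat) \<Rightarrow> nat \<Rightarrow> nat) \<Rightarrow> bool" where
  "is_description T P \<longleftrightarrow> ptree_wf T \<and> ptree_fun T = P"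

definition is_majorant :: "nat \<Rightarrow> (nat \<Rightarrow> nat) \<Rightarrow> ((nat \<Rightarrow> nat) \<Rightarrow> nat \<Rightarrow> nat) \<Rightarrow> bool" where
  "is_majorant N p P \<longleftrightarrow> (\<forall>n. p n \<ge> n) \<and>
     (\<exists>T. is_description T P \<and> ptree_height T = N \<and>
          (\<forall>n. \<forall>t \<in> ptree_labels T. p n \<ge> peval t (\<lambda>_. n)))"

fun piter :: "(nat \<Rightarrow> nat) \<Rightarrow> nat \<Rightarrow> (nat \<Rightarrow> nat) \<Rightarrow> nat \<Rightarrow> nat" where
  "piter p 0 l n = p n"
| "piter p (Suc i) l n = p (max n (l (piter p i l n)))"

end

theory Submission
  imports Defs
begin

lemma peval_mono_vars:
  "(\<forall>i\<in>pvars t. v i \<le> w i) \<Longrightarrow> peval t v \<le> peval t w"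
  by (induction t) (auto intro: add_mono mult_le_mono)

lemma piter_form:
  "\<exists>m\<ge>n. piter p i l n = p m \<and> (\<forall>i'. i = Suc i' \<longrightarrow> l (piter p i' l n) \<le> m)"
proof (cases i)
  case (Suc k)
  have "max n (l (piter p k l n)) \<ge> n \<and> piter p i l n = p (max n (l (piter p k l n))) \<and>
    (\<forall>i'. i = Suc i' \<longrightarrow> l (piter p i' l n) \<le> max n (l (piter p k l n)))"
    using Suc by simp
  then show ?thesis by blast
next
  case 0
  have "n \<ge> n \<and> piter p i l n = p n \<and> (\<forall>i'. i = Suc i' \<longrightarrow> l (piter p i' l n) \<le> n)"
    using 0 by simp
  then show ?thesis by blast
qed

lemma height_child:
  "c \<in> set cs \<Longrightarrow> ptree_height c < ptree_height (PNode t cs)"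
proof (cases cs)
  case (Cons a list)
  assume "c \<in> set cs"
  then have "ptree_height c \<in> set (map ptree_height cs)" by simp
  then have "ptree_height c \<le> Max (set (map ptree_height cs))" by (intro Max_ge) auto
  moreover have "ptree_height (PNode t cs) = Suc (Max (set (map ptree_height cs)))"
    unfolding Cons by (rule ptree_height.simps(2))
  ultimately show ?thesis by linarith
qed simp

lemma main_bound:
  assumes "ptree_wf T" "\<forall>t\<in>ptree_labels T. \<forall>m. peval t (\<lambda>_. m) \<le> p m"
    "mono l" "ptree_height T \<le> i"
  shows "ptree_fun T l n \<le> piter p i l n"
  using assms
proof (induction T arbitrary: i)
  case (PNode t cs)
  obtain m where m: "m \<ge> n" "piter p i l n = p m"
    "\<forall>i'. i = Suc i' \<longrightarrow> l (piter p i' l n) \<le> m"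
    using piter_form[of n p i l] by blast
  have pin: "pvars t \<subseteq> {..length cs}" using PNode.prems(1) by (simp add: poly_in_def)
  define vs where "vs = map (\<lambda>c. l (ptree_fun c l n)) cs"
  have "ptree_fun (PNode t cs) l n = peval t (\<lambda>i. if i = 0 then n else vs ! (i - 1))"
    unfolding vs_def by (simp add: Let_def)
  also have "\<dots> \<le> peval t (\<lambda>_. m)"
  proof (rule peval_mono_vars, intro ballI)
    fix j assume j: "j \<in> pvars t"
    show "(if j = 0 then n else vs ! (j - 1)) \<le> m"
    proof (cases "j = 0")
      case True then show ?thesis using m by simp
    next
      case False
      then have jl: "j - 1 < length cs" using j pin by force
      then have cin: "cs ! (j - 1) \<in> set cs" by simp
      then have "ptree_height (cs ! (j - 1)) < ptree_height (PNode t cs)" by (rule height_child)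
      with PNode.prems(4) obtain i' where i': "i = Suc i'" "ptree_height (cs ! (j - 1)) \<le> i'"
        by (cases i) auto
      have lab: "\<forall>t\<in>ptree_labels (cs ! (j - 1)). \<forall>m. peval t (\<lambda>_. m) \<le> p m"
        using PNode.prems(2) cin by auto
      have wf: "ptree_wf (cs ! (j - 1))" using PNode.prems(1) cin by simp
      have "ptree_fun (cs ! (j - 1)) l n \<le> piter p i' l n"
        by (rule PNode.IH[OF cin wf lab PNode.prems(3) i'(2)])
      then have "l (ptree_fun (cs ! (j - 1)) l n) \<le> l (piter p i' l n)"
        using PNode.prems(3) by (simp add: monoD)
      also have "\<dots> \<le> m" using m i' by simp
      finally show ?thesis using False jl by (simp add: vs_def)
    qed
  qed
  also have "\<dots> \<le> p m" using PNode.prems(2) by simp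
  finally show ?case using m by simp
qed

theorem mainTheorem5:
  fixes P :: "(nat \<Rightarrow> nat) \<Rightarrow> nat \<Rightarrow> nat" and N :: nat and p :: "nat \<Rightarrow> nat"
  assumes "P \<in> second_order_poly"
    and "is_majorant N p P"
    and "mono l"
  shows "P l n \<le> piter p N l n"
proof -
  obtain T where T: "is_description T P" "ptree_height T = N"
    "\<forall>n. \<forall>t \<in> ptree_labels T. p n \<ge> peval t (\<lambda>_. n)"
    using assms(2) unfolding is_majorant_def by blast
  have "ptree_fun T l n \<le> piter p N l n"
  proof (rule main_bound)
    show "ptree_wf T" using T(1) by (simp add: is_description_def)
    show "\<forall>t\<in>ptree_labels T. \<forall>m. peval t (\<lambda>_. m) \<le> p m" using T(3) by blast
  qed (use T assms(3) in simp_all)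
  then show ?thesis using T(1) by (simp add: is_description_def)
qed

end
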